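(* For any $D\subset S$ and $A\subset\Omega$: (a) if $\phi\in F^D_A$, then $\phi_\pi\in F^D_A$; (b) $\overline{F^D_A}\cap\mathcal H_\pi=\overline{F^D_A\cap\mathcal H_\pi}$.
   Context: Let $\mathcal H$ be a complex Hilbert space; $\overline V$ is the closure of $V$. A projection is a bounded self-adjoint idempotent operator; $\wedge_\alpha p_\alpha$ is the projection onto the intersection of ranges. Let $S$ be a set; for each $t\in S$ let $\Gamma(t)$ be a countable set and for $a\in\Gamma(t)$ let $p^t_a$ be a projection on $\mathcal H$ with $\sum_{a\in\Gamma(t)}p^t_a=I$ (strong convergence). Let $\pi=\{p^t_a\}$ and $p^{t_1,\dots,t_k}_{a_1,\dots,a_k}=\wedge_{i=1}^kp^{t_i}_{a_i}$. $\pi$ commutes on $\phi$ if $W\phi=V\phi$ whenever $W,V$ are finite products of elements of $\pi$ with the same factors (with multiplicity) in possibly different orders; $\mathcal H_\pi$ is the closed subspace of such $\phi$, $p_\pi$ its projection, $\phi_\pi=p_\pi\phi$. Let $\Omega=\prod_{t\in S}\Gamma(t)$. For $A\subset\Omega$ and $D\subset S$, $F^D_A=\{\phi\in\mathcal H:$ for every $\omega\in A$ there are $t_1,\dots,t_k\in D$ with $p^{t_1,\dots,t_k}_{\omega_{t_1},\dots,\omega_{t_k}}\phi=0\}$. *)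

theory Defs
  imports "HOL-Analysis.Analysis"
begin

text \<open>A complex Hilbert space is modelled as a real Hilbert space
  ('h :: {real_inner, complete_space}) together with an orthogonal complex
  structure J (multiplication by i): J real-linear, J (J x) = -x,
  inner (J x) (J y) = inner x y.  The real inner product is the real part of
  the complex one.\<close>

definition complex_structure :: "('h::{real_inner,complete_space} \<Rightarrow> 'h) \<Rightarrow> bool" where
  "complex_structure J \<longleftrightarrow> linear J \<and> (\<forall>x. J (J x) = - x) \<and> (\<forall>x y. inner (J x) (J y) = inner x y)"

definition is_projection :: "('h::{real_inner,complete_space} \<Rightarrow> 'h) \<Rightarrow> ('h \<Rightarrow> 'h) \<Rightarrow> bool" where
  "is_projection J p \<longleftrightarrow> bounded_linear p \<and> (\<forall>x. p (J x) = J (p x))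
     \<and> (\<forall>x y. inner (p x) y = inner x (p y)) \<and> (\<forall>x. p (p x) = p x)"

definition proj_onto :: "('h::{real_inner,complete_space} \<Rightarrow> 'h) \<Rightarrow> 'h set \<Rightarrow> ('h \<Rightarrow> 'h)" where
  "proj_onto J M = (THE q. is_projection J q \<and> range q = M)"

definition proj_wedge :: "('h::{real_inner,complete_space} \<Rightarrow> 'h) \<Rightarrow> ('h \<Rightarrow> 'h) list \<Rightarrow> ('h \<Rightarrow> 'h)" where
  "proj_wedge J ps = proj_onto J (\<Inter>p\<in>set ps. range p)"

definition proj_family :: "('h::{real_inner,complete_space} \<Rightarrow> 'h) \<Rightarrow> 's set \<Rightarrow> ('s \<Rightarrow> 'a set)
    \<Rightarrow> ('s \<Rightarrow> 'a \<Rightarrow> 'h \<Rightarrow> 'h) \<Rightarrow> bool" where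
  "proj_family J S \<Gamma> P \<longleftrightarrow>
     (\<forall>t\<in>S. countable (\<Gamma> t) \<and> (\<forall>a\<in>\<Gamma> t. is_projection J (P t a))
        \<and> (\<forall>x. ((\<lambda>a. P t a x) has_sum x) (\<Gamma> t)))"

definition prod_ops :: "('s \<Rightarrow> 'a \<Rightarrow> 'h \<Rightarrow> 'h) \<Rightarrow> ('s \<times> 'a) list \<Rightarrow> 'h \<Rightarrow> 'h" where
  "prod_ops P xs = foldr (\<circ>) (map (\<lambda>(t, a). P t a) xs) id"

definition valid_idx :: "'s set \<Rightarrow> ('s \<Rightarrow> 'a set) \<Rightarrow> ('s \<times> 'a) list \<Rightarrow> bool" where
  "valid_idx S \<Gamma> xs \<longleftrightarrow> (\<forall>(t, a)\<in>set xs. t \<in> S \<and> a \<in> \<Gamma> t)"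

definition commutes_on :: "'s set \<Rightarrow> ('s \<Rightarrow> 'a set) \<Rightarrow> ('s \<Rightarrow> 'a \<Rightarrow> 'h \<Rightarrow> 'h) \<Rightarrow> 'h \<Rightarrow> bool" where
  "commutes_on S \<Gamma> P \<phi> \<longleftrightarrow>
     (\<forall>xs ys. valid_idx S \<Gamma> xs \<and> valid_idx S \<Gamma> ys \<and> mset xs = mset ys
        \<longrightarrow> prod_ops P xs \<phi> = prod_ops P ys \<phi>)"

definition H_pi :: "'s set \<Rightarrow> ('s \<Rightarrow> 'a set) \<Rightarrow> ('s \<Rightarrow> 'a \<Rightarrow> 'h \<Rightarrow> 'h) \<Rightarrow> 'h set" where
  "H_pi S \<Gamma> P = {\<phi>. commutes_on S \<Gamma> P \<phi>}"

text \<open>p_pi, the projection onto H_pi (phi_pi = p_pi phi).\<close>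
definition p_pi :: "('h::{real_inner,complete_space} \<Rightarrow> 'h) \<Rightarrow> 's set \<Rightarrow> ('s \<Rightarrow> 'a set)
    \<Rightarrow> ('s \<Rightarrow> 'a \<Rightarrow> 'h \<Rightarrow> 'h) \<Rightarrow> 'h \<Rightarrow> 'h" where
  "p_pi J S \<Gamma> P = proj_onto J (H_pi S \<Gamma> P)"

definition F_set :: "('h::{real_inner,complete_space} \<Rightarrow> 'h) \<Rightarrow> ('s \<Rightarrow> 'a \<Rightarrow> 'h \<Rightarrow> 'h)
    \<Rightarrow> 's set \<Rightarrow> ('s \<Rightarrow> 'a) set \<Rightarrow> 'h set" where
  "F_set J P D A = {\<phi>. \<forall>\<omega>\<in>A. \<exists>ts. ts \<noteq> [] \<and> set ts \<subseteq> D \<and>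
       proj_wedge J (map (\<lambda>t. P t (\<omega> t)) ts) \<phi> = 0}"

end

theory Submission
  imports Defs
begin

lemma parallelogram_law:
  fixes a b :: "'a::real_inner"
  shows "norm (a+b)^2 + norm (a-b)^2 = 2*norm a^2 + 2*norm b^2"
  by (simp add: power2_norm_eq_inner inner_add_left inner_add_right inner_diff_left inner_diff_right inner_commute)

lemma orth_decomp_exists:
  fixes M :: "'h::{real_inner,complete_space} set"
  assumes cl: "closed M" and sub: "subspace M"
  shows "\<exists>m\<in>M. \<forall>y\<in>M. inner (x - m) y = 0"
proof -
  define d where "d = infdist x M"
  define e where "e n = inverse (real (Suc n))" for n
  have e0: "0 < e n" "e n \<le> 1" for n by (auto simp: e_def field_simps)
  have emono: "e n \<le> e k" if "k \<le> n" for n k using that by (auto simp: e_def field_simps)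
  have M0: "0 \<in> M" using sub subspace_0 by blast
  have d0: "0 \<le> d" by (simp add: d_def infdist_nonneg)
  have dle: "d \<le> norm (x - a)" if "a\<in>M" for a
    using infdist_le[OF that, of x] by (simp add: d_def dist_norm)
  have "\<exists>a\<in>M. norm (x - a) < d + e n" for n
  proof -
    have "infdist x M < d + e n" using e0(1)[of n] by (simp add: d_def)
    then have "(INF a\<in>M. dist x a) < d + e n" using M0 infdist_notempty[of M x] by (metis empty_iff)
    moreover have "bdd_below ((\<lambda>a. dist x a) ` M)" by (rule bdd_belowI2[of _ 0]) auto
    ultimately obtain a where "a \<in> M" "dist x a < d + e n" using cINF_less_iff[of M "dist x"] M0 by blast
    then show ?thesis by (auto simp: dist_norm)
  qed
  then obtain m where mM: "\<And>n. m n \<in> M" and mn: "\<And>n. norm (x - m n) < d + e n" by metis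
  have key: "norm (m n - m k)^2 < (4*d+2) * (e n + e k)" for n k
  proof -
    have mid: "(1/2) *\<^sub>R (m n + m k) \<in> M" using sub mM by (simp add: subspace_add subspace_scale)
    have P: "norm ((x - m n) + (x - m k))^2 + norm ((x - m n) - (x - m k))^2
          = 2*norm (x - m n)^2 + 2*norm (x - m k)^2" by (rule parallelogram_law)
    have h1: "(x - m n) + (x - m k) = 2 *\<^sub>R (x - (1/2) *\<^sub>R (m n + m k))"
      by (simp add: algebra_simps scaleR_2)
    have h2: "(x - m n) - (x - m k) = m k - m n" by simp
    have h3: "norm (2 *\<^sub>R (x - (1/2) *\<^sub>R (m n + m k)))^2 = 4 * norm (x - (1/2) *\<^sub>R (m n + m k))^2"
      by (simp add: power_mult_distrib)
    have h4: "norm (m k - m n) = norm (m n - m k)" by (rule norm_minus_commute)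
    from P have "norm (2 *\<^sub>R (x - (1/2) *\<^sub>R (m n + m k)))^2 + norm (m n - m k)^2
          = 2*norm (x - m n)^2 + 2*norm (x - m k)^2" by (simp only: h1 h2 h4)
    then have eq: "norm (m n - m k)^2 = 2*norm (x - m n)^2 + 2*norm (x - m k)^2
          - 4 * norm (x - (1/2) *\<^sub>R (m n + m k))^2"
      using h3 by linarith
    have "d^2 \<le> norm (x - (1/2) *\<^sub>R (m n + m k))^2" using dle[OF mid] d0 by (simp add: power_mono)
    moreover have "norm (x - m n)^2 < (d + e n)^2" using mn[of n] by (simp add: power_strict_mono)
    moreover have "norm (x - m k)^2 < (d + e k)^2" using mn[of k] by (simp add: power_strict_mono)
    moreover have "(d + e n)^2 \<le> d^2 + (2*d+1) * e n" using e0[of n] d0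
      by (simp add: power2_eq_square algebra_simps mult_left_le)
    moreover have "(d + e k)^2 \<le> d^2 + (2*d+1) * e k" using e0[of k] d0
      by (simp add: power2_eq_square algebra_simps mult_left_le)
    moreover have "(4*d+2)*(e n + e k) = 2*((2*d+1)*e n) + 2*((2*d+1)*e k)" by (simp add: algebra_simps)
    ultimately show ?thesis unfolding eq by linarith
  qed
  have "Cauchy m"
  proof (rule CauchyI)
    fix r :: real assume r: "0 < r"
    have pos: "0 < 8*d+4" using d0 by simp
    have "0 < r^2 / (8*d+4)" using r pos by simp
    then obtain N where N: "inverse (real (Suc N)) < r^2 / (8*d+4)" using reals_Archimedean by blast
    have N': "e N * (8*d+4) < r^2" using N pos unfolding e_def by (simp only: pos_less_divide_eq)
    show "\<exists>N. \<forall>n\<ge>N. \<forall>k\<ge>N. norm (m n - m k) < r"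
    proof (intro exI allI impI)
      fix n k assume "N \<le> n" "N \<le> k"
      then have "e n \<le> e N" "e k \<le> e N" using emono by auto
      then have "e n + e k \<le> 2 * e N" by linarith
      then have "(4*d+2) * (e n + e k) \<le> (4*d+2) * (2 * e N)" using d0 by (intro mult_left_mono) auto
      also have "\<dots> = e N * (8*d+4)" by (simp add: algebra_simps)
      finally have "norm (m n - m k)^2 < r^2" using key[of n k] N' by linarith
      then show "norm (m n - m k) < r" using r power2_less_imp_less[of "norm (m n - m k)" r] by simp
    qed
  qed
  then obtain m0 where lim: "m \<longlonglongrightarrow> m0" using Cauchy_convergent_iff convergent_def by blast
  have m0M: "m0 \<in> M" using cl mM lim closed_sequentially by blast
  have "norm (x - m0) \<le> d"
  proof (rule tendsto_le[OF trivial_limit_sequentially])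
    show "(\<lambda>n. d + e n) \<longlonglongrightarrow> d" unfolding e_def by (rule LIMSEQ_inverse_real_of_nat_add)
    show "(\<lambda>n. norm (x - m n)) \<longlonglongrightarrow> norm (x - m0)" by (intro tendsto_intros lim)
    show "\<forall>\<^sub>F n in sequentially. norm (x - m n) \<le> d + e n" using mn by (simp add: less_imp_le)
  qed
  then have minim: "norm (x - m0) \<le> norm (x - a)" if "a \<in> M" for a using dle[OF that] by simp
  show ?thesis
  proof (intro bexI[OF _ m0M] ballI)
    fix y assume yM: "y \<in> M"
    define a where "a = inner (x - m0) y"
    define b where "b = inner y y"
    show "inner (x - m0) y = 0"
    proof (cases "y = 0")
      case True then show ?thesis by simp
    next
      case False
      then have b0: "b > 0" by (simp add: b_def)
      define t where "t = a / b"
      have "m0 + t *\<^sub>R y \<in> M" using sub m0M yM by (simp add: subspace_add subspace_scale)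
      then have "norm (x - m0)^2 \<le> norm (x - (m0 + t *\<^sub>R y))^2" using minim by (simp add: power_mono)
      also have "\<dots> = norm (x - m0)^2 - 2 * t * a + t^2 * b"
        unfolding power2_norm_eq_inner
        by (simp add: inner_add_left inner_add_right inner_diff_left inner_diff_right
            inner_commute a_def b_def algebra_simps power2_eq_square)
      finally have "2 * t * a \<le> t^2 * b" by simp
      moreover have "2 * t * a = 2 * (a^2 / b)" by (simp add: t_def power2_eq_square)
      moreover have "t^2 * b = a^2 / b" using b0 by (simp add: t_def power2_eq_square)
      ultimately have "a^2 / b \<le> 0" by linarith
      then have "a^2 \<le> 0" using b0 by (simp add: divide_le_0_iff)
      then show ?thesis by (simp add: a_def)
    qed
  qed
qed

definition orth_proj :: "'h::real_inner set \<Rightarrow> ('h \<Rightarrow> 'h) \<Rightarrow> bool" where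
  "orth_proj M p \<longleftrightarrow> (\<forall>x. p x \<in> M \<and> (\<forall>y\<in>M. inner (x - p x) y = 0))"

lemma orth_unique:
  fixes M :: "'h::real_inner set"
  assumes "subspace M" "m \<in> M" "m' \<in> M" "\<forall>y\<in>M. inner (x - m) y = 0" "\<forall>y\<in>M. inner (x - m') y = 0"
  shows "m = m'"
proof -
  have d: "m - m' \<in> M" using assms by (simp add: subspace_diff)
  have "inner (x - m) (m - m') = 0" "inner (x - m') (m - m') = 0" using assms d by auto
  then have "inner ((x - m') - (x - m)) (m - m') = 0" by (simp add: inner_diff_left)
  then have "inner (m - m') (m - m') = 0" by simp
  then show ?thesis by simp
qed

lemma orth_proj_eqI:
  fixes M :: "'h::real_inner set"
  assumes "subspace M" "orth_proj M p" "z \<in> M" "\<forall>y\<in>M. inner (x - z) y = 0"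
  shows "p x = z"
  using assms orth_unique[of M "p x" z x] unfolding orth_proj_def by blast

lemma orth_proj_id:
  fixes M :: "'h::real_inner set"
  assumes "subspace M" "orth_proj M p" "m \<in> M"
  shows "p m = m"
  using orth_proj_eqI[OF assms(1,2,3)] by simp

lemma orth_proj_in: "orth_proj M p \<Longrightarrow> p x \<in> M"
  by (simp add: orth_proj_def)

lemma orth_proj_orth: "orth_proj M p \<Longrightarrow> y \<in> M \<Longrightarrow> inner (x - p x) y = 0"
  by (simp add: orth_proj_def)

lemma orth_proj_selfadj:
  fixes M :: "'h::real_inner set"
  assumes "orth_proj M p"
  shows "inner (p x) y = inner x (p y)"
proof -
  have "inner (y - p y) (p x) = 0" "inner (x - p x) (p y) = 0"
    using assms by (auto simp: orth_proj_def)
  then have "inner (p x) (y - p y) = 0" "inner (x - p x) (p y) = 0" by (simp_all add: inner_commute)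
  then have "inner (p x) y = inner (p x) (p y)" "inner x (p y) = inner (p x) (p y)"
    by (simp_all add: inner_diff_left inner_diff_right)
  then show ?thesis by simp
qed

lemma orth_proj_bl:
  fixes M :: "'h::real_inner set"
  assumes sub: "subspace M" and op: "orth_proj M p"
  shows "bounded_linear p"
proof (rule bounded_linear_intro[where K=1])
  fix x y
  show "p (x + y) = p x + p y"
  proof (rule orth_proj_eqI[OF sub op])
    show "p x + p y \<in> M" using sub op by (simp add: orth_proj_in subspace_add)
    show "\<forall>z\<in>M. inner (x + y - (p x + p y)) z = 0"
    proof
      fix z assume "z \<in> M"
      then have "inner (x - p x) z = 0" "inner (y - p y) z = 0" using op orth_proj_orth by blast+
      then show "inner (x + y - (p x + p y)) z = 0" by (simp add: inner_diff_left inner_add_left)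
    qed
  qed
next
  fix r x
  show "p (r *\<^sub>R x) = r *\<^sub>R p x"
  proof (rule orth_proj_eqI[OF sub op])
    show "r *\<^sub>R p x \<in> M" using sub op by (simp add: orth_proj_in subspace_scale)
    show "\<forall>z\<in>M. inner (r *\<^sub>R x - r *\<^sub>R p x) z = 0"
    proof
      fix z assume "z \<in> M"
      then have "inner (x - p x) z = 0" using op orth_proj_orth by blast
      moreover have "r *\<^sub>R x - r *\<^sub>R p x = r *\<^sub>R (x - p x)" by (simp add: scaleR_diff_right)
      ultimately show "inner (r *\<^sub>R x - r *\<^sub>R p x) z = 0" by simp
    qed
  qed
next
  fix x
  have "inner (x - p x) (p x) = 0" using op orth_proj_orth orth_proj_in by blast
  then have "orthogonal (p x) (x - p x)" by (simp add: orthogonal_def inner_commute)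
  then have "norm (p x + (x - p x))^2 = norm (p x)^2 + norm (x - p x)^2" by (rule norm_add_Pythagorean)
  then have "norm (p x)^2 \<le> norm x^2" by simp
  then have "norm (p x) \<le> norm x" using power2_le_imp_le[of "norm (p x)" "norm x"] by simp
  then show "norm (p x) \<le> norm x * 1" by simp
qed

lemma orth_proj_exists:
  fixes M :: "'h::{real_inner,complete_space} set"
  assumes "closed M" "subspace M"
  shows "\<exists>p. orth_proj M p"
proof -
  have "\<forall>x. \<exists>m. m \<in> M \<and> (\<forall>y\<in>M. inner (x - m) y = 0)"
    using orth_decomp_exists[OF assms] by blast
  then obtain p where "\<forall>x. p x \<in> M \<and> (\<forall>y\<in>M. inner (x - p x) y = 0)" by metis
  then show ?thesis unfolding orth_proj_def by blast
qed

lemma projection_orth: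
  fixes J :: "'h::{real_inner,complete_space} \<Rightarrow> 'h"
  assumes "is_projection J q" "range q = M"
  shows "orth_proj M q"
  unfolding orth_proj_def
proof (intro allI conjI ballI)
  fix x show "q x \<in> M" using assms by auto
next
  fix x y assume "y \<in> M"
  then obtain w where w: "y = q w" using assms by auto
  have lin: "linear q" using assms(1) bounded_linear.linear unfolding is_projection_def by blast
  have "inner (x - q x) y = inner (q (x - q x)) w" using assms(1) w unfolding is_projection_def by metis
  also have "q (x - q x) = q x - q (q x)" using lin by (simp add: linear_diff)
  also have "\<dots> = 0" using assms(1) unfolding is_projection_def by simp
  finally show "inner (x - q x) y = 0" by simp
qed

lemma proj_onto_orth:
  fixes J :: "'h::{real_inner,complete_space} \<Rightarrow> 'h"
  assumes cs: "complex_structure J" and cl: "closed M" and sub: "subspace M" and inv: "\<forall>x\<in>M. J x \<in> M"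
  shows "orth_proj M (proj_onto J M)"
proof -
  obtain p where op: "orth_proj M p" using orth_proj_exists[OF cl sub] by blast
  have linJ: "linear J" and JJ: "\<And>x. J (J x) = - x" and Ji: "\<And>x y. inner (J x) (J y) = inner x y"
    using cs unfolding complex_structure_def by auto
  have bl: "bounded_linear p" by (rule orth_proj_bl[OF sub op])
  have isp: "is_projection J p"
    unfolding is_projection_def
  proof (intro conjI allI bl)
    fix x
    show "p (J x) = J (p x)"
    proof (rule orth_proj_eqI[OF sub op])
      show "J (p x) \<in> M" using inv op orth_proj_in by blast
      show "\<forall>y\<in>M. inner (J x - J (p x)) y = 0"
      proof
        fix y assume yM: "y \<in> M"
        have "inner (J x - J (p x)) y = inner (J (x - p x)) y" using linJ by (simp add: linear_diff)
        also have "\<dots> = inner (J (J (x - p x))) (J y)" using Ji by simp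
        also have "\<dots> = - inner (x - p x) (J y)" using JJ by (simp add: inner_diff_left)
        also have "\<dots> = 0" using inv yM orth_proj_orth[OF op, of "J y" x] by simp
        finally show "inner (J x - J (p x)) y = 0" .
      qed
    qed
  next
    fix x y show "inner (p x) y = inner x (p y)" by (rule orth_proj_selfadj[OF op])
  next
    fix x show "p (p x) = p x" using orth_proj_id[OF sub op] orth_proj_in[OF op] by blast
  qed
  have rng: "range p = M"
  proof
    show "range p \<subseteq> M" using op orth_proj_in by blast
    show "M \<subseteq> range p"
    proof
      fix m assume "m \<in> M" then have "p m = m" by (rule orth_proj_id[OF sub op])
      then show "m \<in> range p" by (metis rangeI)
    qed
  qed
  have uniq: "q = p" if "is_projection J q \<and> range q = M" for q
  proof
    fix x
    have oq: "orth_proj M q" using that projection_orth by blast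
    show "q x = p x"
      using orth_unique[OF sub orth_proj_in[OF oq] orth_proj_in[OF op]] oq op
      unfolding orth_proj_def by blast
  qed
  have "proj_onto J M = p" unfolding proj_onto_def
  proof (rule the_equality)
    show "is_projection J p \<and> range p = M" using isp rng by blast
    show "\<And>q. is_projection J q \<and> range q = M \<Longrightarrow> q = p" by (rule uniq)
  qed
  then show ?thesis using op by simp
qed

lemma proj_range_props:
  fixes J :: "'h::{real_inner,complete_space} \<Rightarrow> 'h"
  assumes "is_projection J p"
  shows "range p = {x. p x = x}" "closed (range p)" "subspace (range p)" "\<forall>x\<in>range p. J x \<in> range p"
proof -
  have bl: "bounded_linear p" and pJ: "\<And>x. p (J x) = J (p x)" and pp: "\<And>x. p (p x) = p x"
    using assms unfolding is_projection_def by auto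
  show r: "range p = {x. p x = x}" using pp by (auto intro: rangeI[of p] simp: image_iff) (metis)
  have "closed {x. p x = x}"
    by (intro closed_Collect_eq linear_continuous_on bl continuous_on_id)
  then show "closed (range p)" using r by simp
  interpret bounded_linear p by (rule bl)
  have "subspace {x. p x = x}" unfolding subspace_def by (auto simp: add scale zero)
  then show "subspace (range p)" using r by simp
  show "\<forall>x\<in>range p. J x \<in> range p"
  proof
    fix y assume "y \<in> range p"
    then obtain x where "y = p x" by auto
    then have "J y = p (J x)" using pJ by simp
    then show "J y \<in> range p" by (metis rangeI)
  qed
qed

lemma prod_ops_Cons: "prod_ops P ((t, a) # xs) = P t a \<circ> prod_ops P xs"
  by (simp add: prod_ops_def)

lemma prod_ops_Nil: "prod_ops P [] = id"
  by (simp add: prod_ops_def)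

lemma prod_ops_snoc: "prod_ops P (xs @ [(t, a)]) = prod_ops P xs \<circ> P t a"
  by (induction xs) (auto simp: prod_ops_def)

lemma prod_ops_props:
  fixes J :: "'h::{real_inner,complete_space} \<Rightarrow> 'h"
  assumes fam: "proj_family J S \<Gamma> P" and v: "valid_idx S \<Gamma> xs"
  shows "bounded_linear (prod_ops P xs) \<and> (\<forall>x. prod_ops P xs (J x) = J (prod_ops P xs x))"
  using v
proof (induction xs)
  case Nil
  then show ?case by (simp add: prod_ops_Nil bounded_linear_ident[unfolded id_def])
next
  case (Cons ta xs)
  obtain t a where ta: "ta = (t, a)" by (cases ta)
  have "t \<in> S" "a \<in> \<Gamma> t" "valid_idx S \<Gamma> xs" using Cons.prems ta by (auto simp: valid_idx_def)
  then have ip: "is_projection J (P t a)" and IH: "bounded_linear (prod_ops P xs) \<and> (\<forall>x. prod_ops P xs (J x) = J (prod_ops P xs x))"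
    using fam Cons.IH unfolding proj_family_def by auto
  have "bounded_linear (P t a)" using ip unfolding is_projection_def by blast
  then have "bounded_linear (\<lambda>b. P t a (prod_ops P xs b))" using IH bounded_linear_compose[of "P t a" "prod_ops P xs"]
    by blast
  moreover have "\<forall>x. P t a (prod_ops P xs (J x)) = J (P t a (prod_ops P xs x))"
    using IH ip unfolding is_projection_def by simp
  ultimately show ?case by (simp add: ta prod_ops_Cons comp_def)
qed

lemma H_pi_props:
  fixes J :: "'h::{real_inner,complete_space} \<Rightarrow> 'h"
  assumes fam: "proj_family J S \<Gamma> P"
  shows "closed (H_pi S \<Gamma> P)" "subspace (H_pi S \<Gamma> P)" "\<forall>x\<in>H_pi S \<Gamma> P. J x \<in> H_pi S \<Gamma> P"
    and "\<And>t a \<phi>. t \<in> S \<Longrightarrow> a \<in> \<Gamma> t \<Longrightarrow> \<phi> \<in> H_pi S \<Gamma> P \<Longrightarrow> P t a \<phi> \<in> H_pi S \<Gamma> P"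
proof -
  define I where "I = {(xs, ys). valid_idx S \<Gamma> xs \<and> valid_idx S \<Gamma> ys \<and> mset xs = mset ys}"
  have H: "H_pi S \<Gamma> P = (\<Inter>(xs, ys)\<in>I. {\<phi>. prod_ops P xs \<phi> = prod_ops P ys \<phi>})"
    by (auto simp: H_pi_def commutes_on_def I_def)
  have bl: "bounded_linear (prod_ops P xs)" and cJ: "\<And>x. prod_ops P xs (J x) = J (prod_ops P xs x)"
    if "valid_idx S \<Gamma> xs" for xs using prod_ops_props[OF fam that] by auto
  have lin: "linear (prod_ops P xs)" if "valid_idx S \<Gamma> xs" for xs using bl[OF that] bounded_linear.linear by blast
  show "closed (H_pi S \<Gamma> P)" unfolding H
  proof (intro closed_INT ballI)
    fix z assume "z \<in> I"
    then obtain xs ys where z: "z = (xs, ys)" "valid_idx S \<Gamma> xs" "valid_idx S \<Gamma> ys" by (auto simp: I_def)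
    have "closed {\<phi>. prod_ops P xs \<phi> = prod_ops P ys \<phi>}"
      by (intro closed_Collect_eq linear_continuous_on bl z)
    then show "closed (case z of (xs, ys) \<Rightarrow> {\<phi>. prod_ops P xs \<phi> = prod_ops P ys \<phi>})" using z by simp
  qed
  show "subspace (H_pi S \<Gamma> P)" unfolding subspace_def
  proof (intro conjI ballI allI)
    show "0 \<in> H_pi S \<Gamma> P" unfolding H_pi_def commutes_on_def mem_Collect_eq
    proof (intro allI impI)
      fix xs ys assume h: "valid_idx S \<Gamma> xs \<and> valid_idx S \<Gamma> ys \<and> mset xs = mset ys"
      then show "prod_ops P xs 0 = prod_ops P ys 0" using linear_0[OF lin, of xs] linear_0[OF lin, of ys] by simp
    qed
  next
    fix x y assume hx: "x \<in> H_pi S \<Gamma> P" and hy: "y \<in> H_pi S \<Gamma> P"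
    show "x + y \<in> H_pi S \<Gamma> P" unfolding H_pi_def commutes_on_def mem_Collect_eq
    proof (intro allI impI)
      fix xs ys assume h: "valid_idx S \<Gamma> xs \<and> valid_idx S \<Gamma> ys \<and> mset xs = mset ys"
      have "prod_ops P xs x = prod_ops P ys x" "prod_ops P xs y = prod_ops P ys y"
        using hx hy h unfolding H_pi_def commutes_on_def by blast+
      then show "prod_ops P xs (x + y) = prod_ops P ys (x + y)"
        using linear_add[OF lin, of xs x y] linear_add[OF lin, of ys x y] h by simp
    qed
  next
    fix c x assume hx: "x \<in> H_pi S \<Gamma> P"
    show "c *\<^sub>R x \<in> H_pi S \<Gamma> P" unfolding H_pi_def commutes_on_def mem_Collect_eq
    proof (intro allI impI)
      fix xs ys assume h: "valid_idx S \<Gamma> xs \<and> valid_idx S \<Gamma> ys \<and> mset xs = mset ys"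
      have "prod_ops P xs x = prod_ops P ys x"
        using hx h unfolding H_pi_def commutes_on_def by blast
      then show "prod_ops P xs (c *\<^sub>R x) = prod_ops P ys (c *\<^sub>R x)"
        using linear_scale[OF lin, of xs c x] linear_scale[OF lin, of ys c x] h by simp
    qed
  qed
  show "\<forall>x\<in>H_pi S \<Gamma> P. J x \<in> H_pi S \<Gamma> P"
  proof
    fix x assume hx: "x \<in> H_pi S \<Gamma> P"
    show "J x \<in> H_pi S \<Gamma> P" unfolding H_pi_def commutes_on_def mem_Collect_eq
    proof (intro allI impI)
      fix xs ys assume h: "valid_idx S \<Gamma> xs \<and> valid_idx S \<Gamma> ys \<and> mset xs = mset ys"
      have "prod_ops P xs x = prod_ops P ys x"
        using hx h unfolding H_pi_def commutes_on_def by blast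
      then show "prod_ops P xs (J x) = prod_ops P ys (J x)"
        using cJ[of xs x] cJ[of ys x] h by simp
    qed
  qed
  fix t a \<phi> assume t: "t \<in> S" and a: "a \<in> \<Gamma> t" and ph: "\<phi> \<in> H_pi S \<Gamma> P"
  show "P t a \<phi> \<in> H_pi S \<Gamma> P" unfolding H_pi_def commutes_on_def mem_Collect_eq
  proof (intro allI impI)
    fix xs ys assume h: "valid_idx S \<Gamma> xs \<and> valid_idx S \<Gamma> ys \<and> mset xs = mset ys"
    have "valid_idx S \<Gamma> (xs @ [(t, a)]) \<and> valid_idx S \<Gamma> (ys @ [(t, a)]) \<and> mset (xs @ [(t, a)]) = mset (ys @ [(t, a)])"
      using h t a by (auto simp: valid_idx_def)
    then have "prod_ops P (xs @ [(t, a)]) \<phi> = prod_ops P (ys @ [(t, a)]) \<phi>"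
      using ph unfolding H_pi_def commutes_on_def by blast
    then show "prod_ops P xs (P t a \<phi>) = prod_ops P ys (P t a \<phi>)" by (simp add: prod_ops_snoc)
  qed
qed

lemma commute_with_orth:
  fixes J :: "'h::{real_inner,complete_space} \<Rightarrow> 'h"
  assumes ip: "is_projection J p" and sub: "subspace H" and op: "orth_proj H pp"
    and inv: "\<forall>h\<in>H. p h \<in> H"
  shows "p (pp y) = pp (p y)"
proof -
  have lin: "linear p" using ip bounded_linear.linear unfolding is_projection_def by blast
  have sa: "\<And>x y. inner (p x) y = inner x (p y)" using ip unfolding is_projection_def by blast
  have "pp (p y) = p (pp y)"
  proof (rule orth_proj_eqI[OF sub op])
    show "p (pp y) \<in> H" using inv orth_proj_in[OF op] by blast
    show "\<forall>g\<in>H. inner (p y - p (pp y)) g = 0"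
    proof
      fix g assume g: "g \<in> H"
      have "inner (p y - p (pp y)) g = inner (p (y - pp y)) g" using lin by (simp add: linear_diff)
      also have "\<dots> = inner (y - pp y) (p g)" by (rule sa)
      also have "\<dots> = 0" using orth_proj_orth[OF op] inv g by blast
      finally show "inner (p y - p (pp y)) g = 0" .
    qed
  qed
  then show ?thesis by simp
qed

theorem lemma9:
  fixes J :: "'h::{real_inner,complete_space} \<Rightarrow> 'h"
    and S :: "'s set" and \<Gamma> :: "'s \<Rightarrow> 'a set" and P :: "'s \<Rightarrow> 'a \<Rightarrow> 'h \<Rightarrow> 'h"
    and D :: "'s set" and A :: "('s \<Rightarrow> 'a) set"
  assumes "complex_structure J"
    and "proj_family J S \<Gamma> P"
    and "D \<subseteq> S" and "A \<subseteq> Pi\<^sub>E S \<Gamma>"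
  shows "(\<forall>\<phi>\<in>F_set J P D A. p_pi J S \<Gamma> P \<phi> \<in> F_set J P D A)
    \<and> closure (F_set J P D A) \<inter> H_pi S \<Gamma> P = closure (F_set J P D A \<inter> H_pi S \<Gamma> P)"
proof -
  note cs = assms(1) and fam = assms(2) and DS = assms(3) and AO = assms(4)
  define H where "H = H_pi S \<Gamma> P"
  define pp where "pp = p_pi J S \<Gamma> P"
  define F where "F = F_set J P D A"
  have Hcl: "closed H" and Hsub: "subspace H" and HJ: "\<forall>x\<in>H. J x \<in> H"
    and Hinv: "\<And>t a h. t \<in> S \<Longrightarrow> a \<in> \<Gamma> t \<Longrightarrow> h \<in> H \<Longrightarrow> P t a h \<in> H"
    using H_pi_props[OF fam] unfolding H_def by auto
  have opp: "orth_proj H pp" unfolding pp_def p_pi_def H_def[symmetric]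
    by (rule proj_onto_orth[OF cs Hcl Hsub HJ])
  have ipP: "is_projection J (P t a)" if "t \<in> S" "a \<in> \<Gamma> t" for t a
    using fam that unfolding proj_family_def by blast
  have partA: "pp \<phi> \<in> F" if phi: "\<phi> \<in> F" for \<phi>
    unfolding F_def F_set_def mem_Collect_eq
  proof
    fix \<omega> assume om: "\<omega> \<in> A"
    obtain ts where ts: "ts \<noteq> []" "set ts \<subseteq> D"
      and z: "proj_wedge J (map (\<lambda>t. P t (\<omega> t)) ts) \<phi> = 0"
      using phi om unfolding F_def F_set_def by blast
    define ps where "ps = map (\<lambda>t. P t (\<omega> t)) ts"
    define M where "M = (\<Inter>p\<in>set ps. range p)"
    have psP: "is_projection J p" if "p \<in> set ps" for p
    proof -
      have "\<exists>t. t \<in> set ts \<and> p = P t (\<omega> t)" using that unfolding ps_def by auto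
      then obtain t where t: "t \<in> set ts" "p = P t (\<omega> t)" by blast
      have "t \<in> S" using t ts DS by auto
      moreover have "\<omega> t \<in> \<Gamma> t" using AO om \<open>t \<in> S\<close> by (auto simp: PiE_def Pi_def)
      ultimately show ?thesis using ipP t by blast
    qed
    have psinv: "\<forall>h\<in>H. p h \<in> H" if "p \<in> set ps" for p
    proof -
      have "\<exists>t. t \<in> set ts \<and> p = P t (\<omega> t)" using that unfolding ps_def by auto
      then obtain t where t: "t \<in> set ts" "p = P t (\<omega> t)" by blast
      have "t \<in> S" using t ts DS by auto
      moreover have "\<omega> t \<in> \<Gamma> t" using AO om \<open>t \<in> S\<close> by (auto simp: PiE_def Pi_def)
      ultimately show ?thesis using Hinv t by blast
    qed
    have Mcl: "closed M" unfolding M_def using proj_range_props(2)[OF psP] by blast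
    have Msub: "subspace M" unfolding M_def using proj_range_props(3)[OF psP]
      by (intro subspace_Inter) auto
    have MJ: "\<forall>x\<in>M. J x \<in> M" unfolding M_def using proj_range_props(4)[OF psP] by blast
    have oq: "orth_proj M (proj_wedge J ps)" unfolding proj_wedge_def M_def[symmetric]
      by (rule proj_onto_orth[OF cs Mcl Msub MJ])
    have phiM: "inner \<phi> y = 0" if "y \<in> M" for y
      using orth_proj_orth[OF oq that, of \<phi>] z unfolding ps_def by simp
    have ppM: "pp y \<in> M" if y: "y \<in> M" for y
      unfolding M_def
    proof
      fix p assume p: "p \<in> set ps"
      have "p y = y" using y p proj_range_props(1)[OF psP[OF p]] unfolding M_def by blast
      then have "p (pp y) = pp y"
        using commute_with_orth[OF psP[OF p] Hsub opp psinv[OF p], of y] by simp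
      then show "pp y \<in> range p" by (metis rangeI)
    qed
    have "proj_wedge J ps (pp \<phi>) = 0"
    proof (rule orth_proj_eqI[OF Msub oq])
      show "0 \<in> M" using Msub subspace_0 by blast
      show "\<forall>y\<in>M. inner (pp \<phi> - 0) y = 0"
        using orth_proj_selfadj[OF opp] phiM ppM by simp
    qed
    then show "\<exists>ts. ts \<noteq> [] \<and> set ts \<subseteq> D \<and> proj_wedge J (map (\<lambda>t. P t (\<omega> t)) ts) (pp \<phi>) = 0"
      using ts unfolding ps_def by blast
  qed
  have blpp: "bounded_linear pp" by (rule orth_proj_bl[OF Hsub opp])
  have eqc: "closure F \<inter> H = closure (F \<inter> H)"
  proof
    show "closure (F \<inter> H) \<subseteq> closure F \<inter> H"
      using closure_mono[of "F \<inter> H" F] closure_minimal[of "F \<inter> H" H] Hcl by auto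
    show "closure F \<inter> H \<subseteq> closure (F \<inter> H)"
    proof
      fix x assume x: "x \<in> closure F \<inter> H"
      then obtain f where f: "\<And>n. f n \<in> F" and lim: "f \<longlonglongrightarrow> x"
        using closure_sequential[of x F] by auto
      have "(\<lambda>n. pp (f n)) \<longlonglongrightarrow> pp x" by (rule bounded_linear.tendsto[OF blpp lim])
      moreover have "pp x = x" using x orth_proj_id[OF Hsub opp] by blast
      moreover have "pp (f n) \<in> F \<inter> H" for n using partA[OF f] orth_proj_in[OF opp] by blast
      ultimately have "(\<forall>n. pp (f n) \<in> F \<inter> H) \<and> (\<lambda>n. pp (f n)) \<longlonglongrightarrow> x" by simp
      then show "x \<in> closure (F \<inter> H)" unfolding closure_sequential by (rule exI[where x="\<lambda>n. pp (f n)"])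
    qed
  qed
  have pa: "\<forall>\<phi>\<in>F. pp \<phi> \<in> F" using partA by blast
  from pa eqc show ?thesis by (simp only: F_def H_def pp_def)
qed

end
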